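(* Let $n\in\mathbb{N}$ and let $\Xi$ be the set of all finitely supported probability measures $\eta$ on $[-1,1]$ satisfying $\int x^\ell\,d\eta(x)=\frac12\int_{-1}^1x^\ell\,dx$ for $\ell=0,\dots,n$. For such $\eta$ let $u(\eta)=\min\{v\in\mathbb{R}^+:\mathrm{supp}\,\eta\subset[-v,v]\}$. Let $r=\lfloor n/2\rfloor+1$, let $x_1^*<\dots<x_r^*$ be the zeros of the Legendre polynomial $P_r(x)$ (orthogonal with respect to Lebesgue measure on $[-1,1]$). Then $$\min_{\eta\in\Xi}u(\eta)=|x_1^*|,$$ and the minimum is attained by the measure $\eta^*$ putting mass $w_i^*=\frac12\int_{-1}^1\ell_i(x)\,dx$ at $x_i^*$, $i=1,\dots,r$, where $\ell_i(x)=\prod_{j\ne i}\frac{x-x_j^*}{x_i^*-x_j^*}$ is the $i$-th Lagrange interpolation polynomial with nodes $x_1^*,\dots,x_r^*$. *)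

theory Defs
  imports "HOL-Probability.Probability" "HOL-Computational_Algebra.Polynomial"
begin

fun legendre :: "nat \<Rightarrow> real poly" where
  "legendre 0 = 1"
| "legendre (Suc 0) = [:0, 1:]"
| "legendre (Suc (Suc k)) =
     smult (1 / (real k + 2))
       (smult (2 * real k + 3) ([:0, 1:] * legendre (Suc k)) - smult (real k + 1) (legendre k))"

definition Xi :: "nat \<Rightarrow> real pmf set" where
  "Xi n = {p. finite (set_pmf p) \<and> set_pmf p \<subseteq> {-1..1} \<and>
     (\<forall>l\<le>n. measure_pmf.expectation p (\<lambda>x. x ^ l) = (1/2) * integral {-1..1} (\<lambda>x. x ^ l))}"

text \<open>u(eta) = min{v >= 0 : supp eta \<subseteq> [-v,v]} = max of |x| over the (finite, nonempty) support.\<close>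
definition u_supp :: "real pmf \<Rightarrow> real" where
  "u_supp p = Max (abs ` set_pmf p)"

definition legendre_zeros :: "nat \<Rightarrow> real set" where
  "legendre_zeros r = {x. poly (legendre r) x = 0}"

definition lagrange_basis :: "real set \<Rightarrow> real \<Rightarrow> real \<Rightarrow> real" where
  "lagrange_basis Z i x = (\<Prod>j\<in>Z - {i}. (x - j) / (i - j))"

definition gauss_weight :: "real set \<Rightarrow> real \<Rightarrow> real" where
  "gauss_weight Z i = (1/2) * integral {-1..1} (lagrange_basis Z i)"

end

theory Submission
  imports Defs
begin


lemma legendre_deg: "degree (legendre k) = k \<and> coeff (legendre k) k > 0"
proof (induction k rule: legendre.induct)
  case 1 then show ?case by simp
next
  case 2 then show ?case by simp
next
  case (3 k)
  let ?P = "legendre (Suc (Suc k))"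
  have nz: "legendre (Suc k) \<noteq> 0" using 3 by (metis degree_0 nat.distinct(1))
  have d1: "degree ([:0, 1:] * legendre (Suc k)) = Suc (Suc k)"
    using 3 nz by (simp add: degree_mult_eq)
  have "coeff ?P (Suc (Suc k)) = (2 * real k + 3) / (real k + 2) * coeff (legendre (Suc k)) (Suc k)"
    using 3 by (simp add: coeff_eq_0)
  moreover have "degree ?P \<le> Suc (Suc k)"
    using 3 d1 by (auto intro!: degree_diff_le degree_smult_le order.trans[OF degree_smult_le])
  ultimately show ?case using 3
    by (smt (verit, best) divide_pos_pos le_antisym le_degree mult_pos_pos of_nat_0_le_iff)
qed

lemma legendre_parity: "poly (legendre k) (-x) = (-1)^k * poly (legendre k) x"
  by (induction k rule: legendre.induct) (auto simp: algebra_simps)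

lemma int_pow: "((\<lambda>x. x^m) has_integral (if even m then 2/(m+1) else 0)) {-1..1::real}"
proof -
  have d: "((\<lambda>x::real. x^(m+1)/(m+1)) has_vector_derivative x^m) (at x within {-1..1})" for x
  proof -
    have "((\<lambda>x::real. x^(m+1)/(m+1)) has_real_derivative x^m) (at x)"
      by (rule derivative_eq_intros refl | simp)+
    then show ?thesis
      using has_real_derivative_iff_has_vector_derivative has_vector_derivative_at_within by blast
  qed
  have "((\<lambda>x. x^m) has_integral ((\<lambda>x::real. x^(m+1)/(m+1)) 1 - (\<lambda>x::real. x^(m+1)/(m+1)) (-1))) {-1..1::real}"
    by (rule fundamental_theorem_of_calculus[of "-1" 1 "\<lambda>x::real. x^(m+1)/(m+1)" "\<lambda>x. x^m", OF _ d]) simp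
  then show ?thesis by (auto simp: field_simps)
qed

lemma alg0: "(x + 2) * (4 * P * A * ((x+y+2)*B) / (C * (U*V*D)))
  = (2 * x + 3) * (2 * P * ((x + 2*y + 3)*A) * ((x+y+2)*B) / (W*C * (U*V*D)))
   - (x + 1) * (P * A * B / (W*C * D))"
  if "x \<ge> 0" "y \<ge> 0" "C > 0" "D > 0" "U > 0" "V > 0" "W > 0" 
   and e: "U = 2*x+2*y+5" "V = 2*x+2*y+4" "W = y+1" for x y A B C D P U V W :: real
proof -
  have h1: "(x + 2) * (4 * P * A * ((x+y+2)*B) / (C * (U*V*D))) = P*A*B/(C*D) * ((x+2)*4*(x+y+2)/(U*V))"
    using that by (simp add: field_simps)
  have h2: "(2 * x + 3) * (2 * P * ((x + 2*y + 3)*A) * ((x+y+2)*B) / (W*C * (U*V*D))) = 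
     P*A*B/(C*D) * ((2 * x + 3)*2*(x + 2*y + 3)*(x+y+2)/(W*U*V))"
    using that by (simp add: field_simps)
  have h3: "(x + 1) * (P * A * B / (W*C * D)) = P*A*B/(C*D) * ((x+1)/W)"
    using that by (simp add: field_simps)
  have h4: "(x+2)*4*(x+y+2)/(U*V) = (2 * x + 3)*2*(x + 2*y + 3)*(x+y+2)/(W*U*V) - (x+1)/W"
  proof -
    have "(x+2)*4*(x+y+2)*W = (2 * x + 3)*2*(x + 2*y + 3)*(x+y+2) - (x+1)*U*V"
      unfolding e by algebra
    have "(2 * x + 3)*2*(x + 2*y + 3)*(x+y+2)/(W*U*V) - (x+1)/W
        = ((2 * x + 3)*2*(x + 2*y + 3)*(x+y+2) - (x+1)*U*V)/(W*U*V)"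
      using that(5-7) by (simp add: diff_divide_distrib)
    also have "\<dots> = (x+2)*4*(x+y+2)*W/(W*U*V)" by (simp only: \<open>(x+2)*4*(x+y+2)*W = _\<close>)
    also have "\<dots> = (x+2)*4*(x+y+2)/(U*V)" using that(7) by simp
    finally show ?thesis by simp
  qed
  show ?thesis unfolding h1 h2 h3 h4 by (simp only: right_diff_distrib)
qed
lemma alg1: "(x+2)*0 = (2*x+3)*(2*P*((x+1)*F)*((x+1)*F)/(1*((2*x+3)*(2*x+2)*D))) - (x+1)*(P*F*F/(1*D))"
  if "x \<ge> 0" "D > 0" for x P F D :: real
proof -
  obtain U V where e: "U = 2*x+3" "V = 2*x+2" by blast
  then have "U > 0" "V > 0" using that by auto
  then have "U*(2*P*((x+1)*F)*((x+1)*F)/(1*(U*V*D))) = (x+1)*(P*F*F/(1*D)) * (2*(x+1)/V)"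
    using that by (simp add: field_simps)
  also have "2*(x+1)/V = 1" using e \<open>V > 0\<close> by simp
  finally show ?thesis unfolding e by simp
qed

lemma alg_g0: "2*A*X/(X*((y+1)*A)) = 2/(y+1)" if "A > 0" "X > 0" "y \<ge> 0" for A X y :: real
proof -
  obtain W where e: "W = y+1" by blast
  then have "W > 0" using that by auto
  then have "2*A*X/(X*(W*A)) = 2/W" using that by (simp add: field_simps)
  then show ?thesis unfolding e .
qed

lemma alg_g1: "4*A*((y+1)*C)/(C*((2*y+3)*(2*y+2)*A)) = 2/(2*y+3)" if "A > 0" "C > 0" "y \<ge> 0" for A C y :: real
proof -
  obtain U V where e: "U = 2*y+3" "V = 2*y+2" by blast
  then have "U > 0" "V > 0" using that by auto
  then have "4*A*((y+1)*C)/(C*(U*V*A)) = 2/U * (2*(y+1)/V)" using that by (simp add: field_simps)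
  also have "2*(y+1)/V = 1" using e \<open>V > 0\<close> by simp
  finally show ?thesis unfolding e by simp
qed


definition G :: "nat \<Rightarrow> nat \<Rightarrow> real" where
  "G k m = (if k \<le> m \<and> even (m - k) then 2^(k+1) * fact m * fact ((m+k) div 2) /
       (fact ((m-k) div 2) * fact (m+k+1)) else 0)"

lemma G_rec: "(real k + 2) * G (Suc (Suc k)) m = (2 * real k + 3) * G (Suc k) (Suc m) - (real k + 1) * G k m"
proof -
  have "m < k \<or> m = k \<or> (k < m \<and> odd (m - k)) \<or> (\<exists>i. m = k + 2 * i + 2)"
  proof (cases "k < m \<and> even (m - k)")
    case True
    then obtain j where j: "m - k = 2 * j" by blast
    with True have "j \<ge> 1" by (cases j) auto
    then have "m = k + 2 * (j - 1) + 2" using j True by simp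
    then show ?thesis by blast
  qed auto
  then consider "m < k" | "m = k" | "k < m" "odd (m - k)" | i where "m = k + 2 * i + 2"
    by blast
  then show ?thesis
  proof cases
    case 1 then show ?thesis by (simp add: G_def)
  next
    case 2
    have a: "(Suc k + Suc k) div 2 = Suc k" "(k + k) div 2 = k" by simp_all
    have f1: "fact (Suc k + Suc k + 1) = (2*real k+3)*(2*real k+2)*(fact (k+k+1)::real)"
      by (simp add: fact_Suc algebra_simps)
    have f2: "fact (Suc k) = (real k+1)*(fact k::real)" by (simp add: algebra_simps)
    have p: "(2::real)^(Suc k + 1) = 2 * 2^(k+1)" by simp
    have pos: "(fact (k+k+1)::real) > 0" "(fact k::real) > 0" by simp_all
    have g2: "G (Suc (Suc k)) k = 0" by (simp add: G_def)
    show ?thesis unfolding 2 g2 unfolding G_def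
      apply (simp only: a f1 f2 p diff_self_eq_0 le_refl even_zero simp_thms if_True div_0 fact_0)
      apply (rule alg1)
      using pos apply simp_all
      done
  next
    case 3 then show ?thesis by (auto simp: G_def)
  next
    case 4
    have a: "(m + Suc (Suc k)) div 2 = k + i + 2" "(m - Suc (Suc k)) div 2 = i"
         "(Suc m + Suc k) div 2 = k + i + 2" "(Suc m - Suc k) div 2 = i + 1"
         "(m + k) div 2 = k + i + 1" "(m - k) div 2 = i + 1"
      using 4 by simp_all
    have b: "m + Suc (Suc k) + 1 = 2*k+2*i+5" "Suc m + Suc k + 1 = 2*k+2*i+5" "m + k + 1 = 2*k+2*i+3"
      using 4 by simp_all
    have f: "fact (2*k+2*i+5) = (2*real k+2*real i+5)*(2*real k+2*real i+4)*(fact (2*k+2*i+3)::real)"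
      by (simp add: fact_Suc eval_nat_numeral algebra_simps)
    have f2: "fact (k+i+2) = (real k+real i+2)*(fact (k+i+1)::real)"
      by (simp add: fact_Suc eval_nat_numeral algebra_simps)
    have f3: "fact (i+1) = (real i+1)*(fact i::real)" by (simp add: algebra_simps)
    have f4: "fact (Suc m) = (real k + 2 * real i + 3)*(fact m::real)" using 4 by (simp add: algebra_simps)
    have e: "even (m - Suc (Suc k))" "even (Suc m - Suc k)" "even (m - k)" using 4 by simp_all
    have l: "Suc (Suc k) \<le> m" "Suc k \<le> Suc m" "k \<le> m" using 4 by simp_all
    have p: "(2::real)^(Suc (Suc k) + 1) = 4 * 2^(k+1)" "(2::real)^(Suc k + 1) = 2 * 2^(k+1)" by simp_all
    show ?thesis unfolding G_def
      apply (simp only: a b e l if_True simp_thms f f2 f3 f4 p)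
      apply (rule alg0)
      apply (simp_all add: mult.assoc)
      done
  qed
qed

lemma G0: "G 0 m = (if even m then 2/(m+1) else 0)"
proof (cases "even m")
  case True
  have f: "fact (m + 1) = (real m + 1) * (fact m :: real)" "(2::real)^(0+1) = 2" by (simp_all add: algebra_simps)
  show ?thesis using True unfolding G_def
    apply (simp only: f add_0_right diff_zero power_one_right simp_thms if_True le0 one_add_one)
    apply (rule alg_g0)
    apply simp_all
    done
qed (simp add: G_def)

lemma G1: "G 1 m = (if even (m+1) then 2/(m+2) else 0)"
proof (cases "even m")
  case True then show ?thesis by (auto simp: G_def)
next
  case False
  then obtain j where j: "m = 2*j+1" by (metis oddE)
  have a: "(m + 1) div 2 = j + 1" "(m - 1) div 2 = j" "m + 1 + 1 = 2*j+3" using j by simp_all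
  have f: "fact (2*j+3) = (2*real j+3)*(2*real j+2)*(fact (2*j+1)::real)"
    by (simp add: fact_Suc eval_nat_numeral algebra_simps)
  have f2: "fact (j+1) = (real j+1)*(fact j::real)" by (simp add: algebra_simps)
  have r: "real (2*j+1) + 2 = 2*real j+3" by simp
  have e: "even (m+1)" "even (m - 1)" "1 \<le> m" "(2::real)^(1+1) = 4" "real (m+2) = 2*real j+3" using j by simp_all
  show ?thesis unfolding G_def
    apply (simp only: a f f2 e if_True simp_thms)
    unfolding j
    apply (simp only: r)
    apply (rule alg_g1)
    apply simp_all
    done
qed



lemma moment: "((\<lambda>x. x^m * poly (legendre k) x) has_integral G k m) {-1..1}"
proof (induction k arbitrary: m rule: legendre.induct)
  case 1 show ?case using int_pow[of m] by (simp add: G0)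
next
  case 2
  have e: "(\<lambda>x::real. x^m * poly (legendre (Suc 0)) x) = (\<lambda>x. x^(Suc m))"
    by (rule ext) (simp add: mult.commute)
  have r: "real (Suc m) + 1 = real m + 2" by simp
  show ?case unfolding e using int_pow[of "Suc m"] G1[of m] by (simp only: r) simp
next
  case (3 k)
  have h: "((\<lambda>x. (1/(real k+2)) * ((2*real k+3) * (x^(Suc m) * poly (legendre (Suc k)) x)
      - (real k+1) * (x^m * poly (legendre k) x))) has_integral
      (1/(real k+2))*((2*real k+3)*G (Suc k) (Suc m) - (real k+1)*G k m)) {-1..1}"
    by (intro has_integral_mult_right has_integral_diff 3)
  have v: "(1/(real k+2))*((2*real k+3)*G (Suc k) (Suc m) - (real k+1)*G k m) = G (Suc (Suc k)) m"
    using G_rec[of k m] by (simp add: field_simps)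
  show ?case
    by (rule has_integral_eq[OF _ h[unfolded v]]) (simp add: algebra_simps)
qed

lemma moment_zero: "m < k \<Longrightarrow> ((\<lambda>x. x^m * poly (legendre k) x) has_integral 0) {-1..1}"
  using moment[of m k] by (simp add: G_def)

lemma ortho: "degree q < k \<Longrightarrow> ((\<lambda>x. poly (legendre k) x * poly q x) has_integral 0) {-1..1}"
proof -
  assume d: "degree q < k"
  have "((\<lambda>x. \<Sum>i\<le>degree q. coeff q i * (x^i * poly (legendre k) x)) has_integral (\<Sum>i\<le>degree q. coeff q i * 0)) {-1..1}"
    using d by (intro has_integral_sum has_integral_mult_right moment_zero) auto
  then have "((\<lambda>x. \<Sum>i\<le>degree q. coeff q i * (x^i * poly (legendre k) x)) has_integral 0) {-1..1}"
    by simp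
  then show ?thesis
    by (rule has_integral_eq[rotated]) (simp add: poly_altdef[of q] sum_distrib_left sum_distrib_right algebra_simps)
qed

lemma poly_has_integral: "((\<lambda>x. poly f x) has_integral (\<Sum>i\<le>degree f. coeff f i * integral {-1..1} (\<lambda>x::real. x^i))) {-1..1}"
proof -
  have "((\<lambda>x. \<Sum>i\<le>degree f. coeff f i * x^i) has_integral (\<Sum>i\<le>degree f. coeff f i * integral {-1..1} (\<lambda>x::real. x^i))) {-1..1}"
    by (intro has_integral_sum has_integral_mult_right integrable_integral)
       (auto intro: has_integral_integrable[OF int_pow])
  then show ?thesis by (simp add: poly_altdef)
qed

lemma poly_integrable: "(\<lambda>x. poly f x) integrable_on {-1..1::real}"
  using poly_has_integral by blast

lemma pmf_poly:
  assumes "finite (set_pmf p)"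
  shows "measure_pmf.expectation p (\<lambda>x. poly f x) = (\<Sum>i\<le>degree f. coeff f i * measure_pmf.expectation p (\<lambda>x::real. x^i))"
proof -
  have "measure_pmf.expectation p (\<lambda>x. poly f x) = measure_pmf.expectation p (\<lambda>x. \<Sum>i\<le>degree f. coeff f i * x^i)"
    by (simp add: poly_altdef)
  also have "\<dots> = (\<Sum>i\<le>degree f. measure_pmf.expectation p (\<lambda>x. coeff f i * x^i))"
    by (rule Bochner_Integration.integral_sum) (simp add: integrable_measure_pmf_finite assms)
  also have "\<dots> = (\<Sum>i\<le>degree f. coeff f i * measure_pmf.expectation p (\<lambda>x::real. x^i))"
    by simp
  finally show ?thesis .
qed

lemma Xi_poly:
  assumes "p \<in> Xi n" "degree f \<le> n"
  shows "measure_pmf.expectation p (\<lambda>x. poly f x) = (1/2) * integral {-1..1} (\<lambda>x. poly f x)"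
proof -
  have "measure_pmf.expectation p (\<lambda>x. poly f x) = (\<Sum>i\<le>degree f. coeff f i * ((1/2) * integral {-1..1} (\<lambda>x::real. x^i)))"
    using assms unfolding pmf_poly[OF assms(1)[unfolded Xi_def, simplified, THEN conjunct1]]
    by (intro sum.cong refl) (auto simp: Xi_def)
  also have "\<dots> = (1/2) * integral {-1..1} (\<lambda>x. poly f x)"
    using integral_unique[OF poly_has_integral[of f]] by (simp add: sum_distrib_left algebra_simps)
  finally show ?thesis .
qed



lemma poly_int_zero:
  fixes h :: "real poly"
  assumes "((\<lambda>x. poly h x) has_integral 0) {-1..1}" "\<forall>x\<in>{-1<..<1}. poly h x \<ge> 0"
  shows "h = 0"
proof (rule ccontr)
  assume nz: "h \<noteq> 0"
  have c: "continuous_on {-1..1} (\<lambda>x. poly h x)" by (intro continuous_intros)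
  have "poly h x = 0" if "x \<in> {-1..1}" for x
    using has_integral_0_cbox_imp_0[of "-1" 1 "\<lambda>x. poly h x" x] c assms that
    by auto
  then have "{-1..1::real} \<subseteq> {x. poly h x = 0}" by blast
  moreover have "finite {x. poly h x = 0}" using poly_roots_finite[OF nz] .
  ultimately have "finite {-1..1::real}" by (rule finite_subset)
  then show False using infinite_Icc[of "-1::real" 1] by simp
qed

lemma order_linear_poly: "order z [:-y, 1:] = (if z = y then 1 else (0::nat))" for y z :: real
proof (cases "z = y")
  case True then show ?thesis using order_power_n_n[of y 1] by simp
next
  case False
  then have "poly [:-y, 1:] z \<noteq> 0" by simp
  then have "order z [:-y, 1:] = 0" by (rule order_0I)
  with False show ?thesis by simp
qed

lemma prod_linear_nz: "finite S \<Longrightarrow> (\<Prod>y\<in>S. [:-y, 1:]) \<noteq> (0::real poly)"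
proof (induction S rule: finite_induct)
  case (insert a S)
  have "[:-a, 1:] \<noteq> (0::real poly)" by simp
  with insert.IH show ?case by (simp only: prod.insert[OF insert.hyps] mult_eq_0_iff) blast
qed simp

lemma order_prod_linear:
  fixes S :: "real set"
  assumes "finite S"
  shows "order z (\<Prod>y\<in>S. [:-y, 1:]) = (if z \<in> S then 1 else 0)"
  using assms
proof (induction S rule: finite_induct)
  case empty then show ?case using order_0I[of 1 z] by simp
next
  case (insert a S)
  have a: "[:-a, 1:] \<noteq> (0::real poly)" by simp
  have nz: "[:-a, 1:] * (\<Prod>y\<in>S. [:-y, 1:]) \<noteq> 0"
    using prod_linear_nz[OF insert.hyps(1)] a by (simp only: mult_eq_0_iff) blast
  have "order z (\<Prod>y\<in>insert a S. [:-y, 1:]) = order z [:-a, 1:] + order z (\<Prod>y\<in>S. [:-y, 1:])"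
    by (simp only: prod.insert[OF insert.hyps]) (rule order_mult[OF nz])
  then show ?case using insert.IH insert.hyps by (simp add: order_linear_poly)
qed

lemma even_order_sign:
  fixes h :: "real poly"
  assumes "h \<noteq> 0" "\<forall>y\<in>{a<..<b}. even (order y h)"
  shows "(\<forall>x\<in>{a<..<b}. poly h x \<ge> 0) \<or> (\<forall>x\<in>{a<..<b}. poly h x \<le> 0)"
  using assms
proof (induction "degree h" arbitrary: h rule: less_induct)
  case (less h)
  show ?case
  proof (cases "\<exists>y\<in>{a<..<b}. poly h y = 0")
    case True
    then obtain y where y: "y \<in> {a<..<b}" "poly h y = 0" by blast
    have "order y h \<noteq> 0" using y less.prems order_root by blast
    moreover have "even (order y h)" using less.prems(2) y by blast
    ultimately have "2 \<le> order y h" by (auto elim!: evenE)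
    then have "[:-y,1:]^2 dvd h" using order_divides by blast
    then obtain g where g: "h = [:-y,1:]^2 * g" by (auto elim: dvdE)
    have gnz: "g \<noteq> 0" using g less.prems(1) by auto
    have "degree h = 2 + degree g" using g gnz by (simp add: degree_mult_eq degree_power_eq)
    then have dg: "degree g < degree h" by simp
    have ev: "\<forall>z\<in>{a<..<b}. even (order z g)"
    proof
      fix z assume z: "z \<in> {a<..<b}"
      have "order z h = order z ([:-y,1:]^2) + order z g"
        using g less.prems(1) by (simp add: order_mult)
      moreover have "order z ([:-y,1:]^2) = (if z = y then 2 else 0)"
        using order_power_n_n[of y 2] by (auto intro!: order_0I)
      moreover have "even (order z h)" using less.prems(2) z by blast
      ultimately show "even (order z g)" by (auto split: if_splits)
    qed
    have sq: "poly h x = (x - y)^2 * poly g x" for x using g by (simp add: power2_eq_square algebra_simps)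
    from less.hyps[OF dg gnz ev] show ?thesis
      unfolding sq by (auto intro: mult_nonneg_nonneg mult_nonneg_nonpos)
  next
    case False
    show ?thesis
    proof (rule ccontr)
      assume "\<not> ?thesis"
      then obtain x1 x2 where x: "x1 \<in> {a<..<b}" "x2 \<in> {a<..<b}" "poly h x1 < 0" "poly h x2 > 0"
        by (auto simp: not_le)
      show False
      proof (cases "x1 < x2")
        case True
        from poly_IVT_pos[OF True x(3,4)] obtain x where "x1 < x" "x < x2" "poly h x = 0" by blast
        then show False using False x by auto
      next
        case f: False
        then have "x2 < x1" using x by (cases "x1 = x2") auto
        from poly_IVT_neg[OF this x(4,3)] obtain x where "x2 < x" "x < x1" "poly h x = 0" by blast
        then show False using False x by auto
      qed
    qed
  qed
qed

lemma legendre_nz: "legendre k \<noteq> 0"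
  using legendre_deg[of k] by auto

lemma legendre_roots:
  shows "finite (legendre_zeros r) \<and> legendre_zeros r \<subseteq> {-1<..<1} \<and> card (legendre_zeros r) = r"
proof -
  define f where "f = legendre r"
  define Z where "Z = legendre_zeros r"
  have fnz: "f \<noteq> 0" unfolding f_def by (rule legendre_nz)
  have Zf: "Z = {x. poly f x = 0}" unfolding Z_def f_def legendre_zeros_def ..
  have finZ: "finite Z" unfolding Zf using poly_roots_finite[OF fnz] .
  have cardZ: "card Z \<le> r" unfolding Zf using card_poly_roots_bound[OF fnz] legendre_deg[of r] f_def by simp
  define S where "S = {y\<in>{-1<..<1}. odd (order y f)}"
  have SZ: "S \<subseteq> Z"
  proof
    fix y assume "y \<in> S"
    then have "order y f \<noteq> 0" unfolding S_def by (auto elim!: oddE)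
    then show "y \<in> Z" unfolding Zf by (simp add: order_root)
  qed
  have finS: "finite S" using finite_subset[OF SZ finZ] .
  define q where "q = (\<Prod>y\<in>S. [:-y, 1:])"
  have qnz: "q \<noteq> 0" unfolding q_def by (rule prod_linear_nz[OF finS])
  have dq: "degree q \<le> card S"
    unfolding q_def using degree_prod_sum_le[OF finS, of "\<lambda>y. [:-y, 1:]"] by (simp add: o_def)
  have "card S \<ge> r"
  proof (rule ccontr)
    assume "\<not> card S \<ge> r"
    then have "degree q < r" using dq by simp
    from ortho[OF this] have int0: "((\<lambda>x. poly (f * q) x) has_integral 0) {-1..1}" by (simp add: f_def)
    have hnz: "f * q \<noteq> 0" using fnz qnz by simp
    have ev: "\<forall>y\<in>{-1<..<1}. even (order y (f * q))"
    proof
      fix y :: real assume y: "y \<in> {-1<..<1}"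
      have "order y (f * q) = order y f + (if y \<in> S then 1 else 0)"
        using hnz by (simp add: order_mult q_def order_prod_linear finS)
      then show "even (order y (f * q))" using y by (auto simp: S_def)
    qed
    from even_order_sign[OF hnz ev] show False
    proof
      assume "\<forall>x\<in>{-1<..<1}. poly (f * q) x \<ge> 0"
      from poly_int_zero[OF int0 this] hnz show False by simp
    next
      assume a: "\<forall>x\<in>{-1<..<1}. poly (f * q) x \<le> 0"
      have "((\<lambda>x. poly (- (f * q)) x) has_integral 0) {-1..1}"
        using has_integral_neg[OF int0] by simp
      from poly_int_zero[OF this] a hnz show False by simp
    qed
  qed
  then have "card S = card Z" using cardZ card_mono[OF finZ SZ] by simp
  then have "S = Z" using card_subset_eq[OF finZ SZ] by simp
  then have "Z \<subseteq> {-1<..<1}" unfolding S_def by blast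
  then show ?thesis using finZ \<open>card S = card Z\<close> \<open>card S \<ge> r\<close> cardZ unfolding Z_def by simp
qed



definition lag_poly :: "real set \<Rightarrow> real \<Rightarrow> real poly" where
  "lag_poly Z i = (\<Prod>j\<in>Z-{i}. smult (1/(i-j)) [:-j, 1:])"

lemma poly_lag: "poly (lag_poly Z i) x = lagrange_basis Z i x"
  unfolding lag_poly_def lagrange_basis_def poly_prod
  by (rule prod.cong) (simp_all add: divide_inverse algebra_simps)

lemma deg_lag: assumes "finite Z" "i \<in> Z" shows "degree (lag_poly Z i) \<le> card Z - 1"
proof -
  have "degree (lag_poly Z i) \<le> sum (degree \<circ> (\<lambda>j. smult (1/(i-j)) [:-j, 1:])) (Z-{i})"
    unfolding lag_poly_def by (rule degree_prod_sum_le) (use assms in simp)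
  also have "\<dots> \<le> (\<Sum>j\<in>Z-{i}. 1)"
    by (intro sum_mono) (unfold o_def, rule order.trans[OF degree_smult_le], simp)
  also have "\<dots> = card (Z - {i})" by simp
  also have "\<dots> \<le> card Z - 1" using assms by (simp add: card_Diff_singleton_if)
  finally show ?thesis .
qed

lemma lag_at: assumes "finite Z" "i \<in> Z" "y \<in> Z"
  shows "lagrange_basis Z i y = (if y = i then 1 else 0)"
proof (cases "y = i")
  case True
  have "(\<Prod>j\<in>Z - {i}. (y - j) / (i - j)) = 1" using True by (intro prod.neutral) auto
  then show ?thesis using True unfolding lagrange_basis_def by simp
next
  case False
  have "(\<Prod>j\<in>Z - {i}. (y - j) / (i - j)) = 0"
    using assms False by (subst prod_zero_iff) auto
  then show ?thesis using False unfolding lagrange_basis_def by simp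
qed

lemma interp:
  assumes "finite Z" "degree t < card Z"
  shows "poly t x = (\<Sum>i\<in>Z. poly t i * lagrange_basis Z i x)"
proof -
  define L where "L = (\<Sum>i\<in>Z. smult (poly t i) (lag_poly Z i))"
  have pL: "poly L x = (\<Sum>i\<in>Z. poly t i * lagrange_basis Z i x)" for x
    unfolding L_def poly_sum by (simp add: poly_lag)
  have dd: "degree (smult c (lag_poly Z i)) \<le> card Z - 1" if "i \<in> Z" for c i
    using order.trans[OF degree_smult_le deg_lag[OF assms(1) that]] .
  have dL: "degree L \<le> card Z - 1"
    unfolding L_def using assms(1) dd by (intro degree_sum_le) auto
  have "t = L"
  proof (rule poly_eqI_degree[of Z])
    fix y assume y: "y \<in> Z"
    have "(\<Sum>i\<in>Z. poly t i * lagrange_basis Z i y) = (\<Sum>i\<in>Z. if i = y then poly t y else 0)"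
      using assms(1) y by (intro sum.cong) (auto simp: lag_at)
    also have "\<dots> = poly t y" using assms(1) y by simp
    finally show "poly t y = poly L y" unfolding pL by simp
  next
    show "degree t < card Z" by fact
    show "degree L < card Z" using dL assms(2) by linarith
  qed
  then have "poly t x = poly L x" by simp
  then show ?thesis by (simp only: pL)
qed

lemma lag_integrable: "lagrange_basis Z i integrable_on {-1..1}"
  using poly_integrable[of "lag_poly Z i"] by (simp add: poly_lag[abs_def])

lemma quad:
  fixes r :: nat
  defines "Z \<equiv> legendre_zeros r"
  assumes r: "r \<ge> 1" and df: "degree f \<le> 2*r - 1"
  shows "integral {-1..1} (\<lambda>x. poly f x) = (\<Sum>z\<in>Z. poly f z * integral {-1..1} (lagrange_basis Z z))"
proof -
  define P where "P = legendre r"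
  have Pnz: "P \<noteq> 0" unfolding P_def by (rule legendre_nz)
  have dP: "degree P = r" unfolding P_def using legendre_deg by blast
  have Zr: "finite Z" "card Z = r" using legendre_roots[of r] unfolding Z_def by auto
  have PZ: "poly P z = 0" if "z \<in> Z" for z using that unfolding Z_def P_def legendre_zeros_def by simp
  define s where "s = f div P"
  define t where "t = f mod P"
  have f: "f = s * P + t" unfolding s_def t_def by simp
  have dt: "degree t < r"
    using degree_mod_less[OF Pnz, of f] dP r unfolding t_def by auto
  have ds: "degree s < r"
  proof (cases "s = 0")
    case False
    have "degree (s * P) = degree s + r" using False Pnz dP by (simp add: degree_mult_eq)
    moreover have "s * P = f - t" using f by simp
    moreover have "degree (f - t) \<le> max (degree f) (degree t)" by (rule degree_diff_le_max)
    ultimately have "degree s + r \<le> 2 * r - 1" using df dt by simp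
    then show ?thesis using r by simp
  qed (use r in simp)
  have i1: "((\<lambda>x. poly P x * poly s x) has_integral 0) {-1..1}"
    unfolding P_def by (rule ortho) (use ds in simp)
  have i2: "((\<lambda>x. \<Sum>z\<in>Z. poly t z * lagrange_basis Z z x) has_integral
      (\<Sum>z\<in>Z. poly t z * integral {-1..1} (lagrange_basis Z z))) {-1..1}"
    using Zr(1) by (intro has_integral_sum has_integral_mult_right integrable_integral lag_integrable)
  have "((\<lambda>x. poly P x * poly s x + (\<Sum>z\<in>Z. poly t z * lagrange_basis Z z x)) has_integral
      (0 + (\<Sum>z\<in>Z. poly t z * integral {-1..1} (lagrange_basis Z z)))) {-1..1}"
    by (rule has_integral_add[OF i1 i2])
  moreover have e1: "poly P x * poly s x + (\<Sum>z\<in>Z. poly t z * lagrange_basis Z z x) = poly f x" for x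
  proof -
    have "poly t x = (\<Sum>z\<in>Z. poly t z * lagrange_basis Z z x)"
      by (rule interp[OF Zr(1)]) (use dt Zr(2) in simp)
    then show ?thesis by (subst f) (simp add: algebra_simps)
  qed
  moreover have "(\<Sum>z\<in>Z. poly t z * integral {-1..1} (lagrange_basis Z z)) = (\<Sum>z\<in>Z. poly f z * integral {-1..1} (lagrange_basis Z z))"
  proof (rule sum.cong)
    fix z assume "z \<in> Z"
    then have "poly t z = poly f z" using PZ by (subst f) simp
    then show "poly t z * integral {-1..1} (lagrange_basis Z z) = poly f z * integral {-1..1} (lagrange_basis Z z)" by simp
  qed simp
  ultimately have "((\<lambda>x. poly f x) has_integral (\<Sum>z\<in>Z. poly f z * integral {-1..1} (lagrange_basis Z z))) {-1..1}"
    by simp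
  then show ?thesis by (rule integral_unique)
qed



lemma weights:
  fixes r :: nat
  defines "Z \<equiv> legendre_zeros r"
  assumes r: "r \<ge> 1"
  shows "\<forall>z\<in>Z. integral {-1..1} (lagrange_basis Z z) > 0"
    and "(\<Sum>z\<in>Z. gauss_weight Z z) = 1"
proof -
  have Zr: "finite Z" "card Z = r" using legendre_roots[of r] unfolding Z_def by auto
  show "\<forall>z\<in>Z. integral {-1..1} (lagrange_basis Z z) > 0"
  proof
    fix z assume z: "z \<in> Z"
    define f where "f = (lag_poly Z z)^2"
    have pf: "poly f x = (lagrange_basis Z z x)^2" for x unfolding f_def by (simp add: poly_lag)
    have "degree f \<le> 2 * (card Z - 1)" unfolding f_def
      using order.trans[OF degree_power_le, of "lag_poly Z z" 2] deg_lag[OF Zr(1) z] by simp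
    then have df: "degree f \<le> 2*r - 1" using Zr by simp
    have "integral {-1..1} (\<lambda>x. poly f x) = (\<Sum>y\<in>Z. poly f y * integral {-1..1} (lagrange_basis Z y))"
      using quad[OF r df] unfolding Z_def .
    also have "\<dots> = (\<Sum>y\<in>Z. if y = z then integral {-1..1} (lagrange_basis Z z) else 0)"
      by (rule sum.cong) (auto simp: pf lag_at[OF Zr(1) z])
    also have "\<dots> = integral {-1..1} (lagrange_basis Z z)" using Zr(1) z by simp
    finally have eq: "integral {-1..1} (\<lambda>x. poly f x) = integral {-1..1} (lagrange_basis Z z)" .
    have nn: "integral {-1..1} (\<lambda>x. poly f x) \<ge> 0"
      by (rule integral_nonneg[OF poly_integrable]) (simp add: pf)
    have "integral {-1..1} (\<lambda>x. poly f x) \<noteq> 0"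
    proof
      assume "integral {-1..1} (\<lambda>x. poly f x) = 0"
      then have "((\<lambda>x. poly f x) has_integral 0) {-1..1}"
        using integrable_integral[OF poly_integrable[of f]] by simp
      from poly_int_zero[OF this] have "f = 0" by (simp add: pf)
      moreover have "poly f z = 1" using pf lag_at[OF Zr(1) z z] by simp
      ultimately show False by simp
    qed
    then show "integral {-1..1} (lagrange_basis Z z) > 0" using nn eq by simp
  qed
  have "integral {-1..1} (\<lambda>x. poly 1 x) = (\<Sum>y\<in>Z. poly 1 y * integral {-1..1} (lagrange_basis Z y))"
    using quad[OF r, of 1] unfolding Z_def by simp
  moreover have "integral {-1..1} (\<lambda>x. poly (1::real poly) x) = 2"
    using integral_unique[OF int_pow[of 0]] by simp
  ultimately show "(\<Sum>z\<in>Z. gauss_weight Z z) = 1"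
    unfolding gauss_weight_def by (simp add: sum_divide_distrib[symmetric])
qed

lemma quadw:
  fixes r :: nat
  defines "Z \<equiv> legendre_zeros r"
  assumes r: "r \<ge> 1" and df: "degree f \<le> 2*r - 1"
  shows "(1/2) * integral {-1..1} (\<lambda>x. poly f x) = (\<Sum>z\<in>Z. gauss_weight Z z * poly f z)"
  unfolding quad[OF r df] Z_def gauss_weight_def
  by (simp add: sum_distrib_left algebra_simps)

lemma zeros_sym: "z \<in> legendre_zeros r \<Longrightarrow> -z \<in> legendre_zeros r"
  unfolding legendre_zeros_def by (simp add: legendre_parity)

theorem lemmaA1:
  fixes n :: nat
  defines "r \<equiv> n div 2 + 1"
  defines "Z \<equiv> legendre_zeros r"
  shows "(\<forall>p\<in>Xi n. \<bar>Min Z\<bar> \<le> u_supp p) \<and>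
         (\<exists>q. (\<forall>x. pmf q x = (if x \<in> Z then gauss_weight Z x else 0)) \<and>
              q \<in> Xi n \<and> u_supp q = \<bar>Min Z\<bar>)"
proof -
  have r1: "r \<ge> 1" unfolding r_def by simp
  have rn: "2*r - 2 \<le> n" "n \<le> 2*r - 1" unfolding r_def by auto
  have Zr: "finite Z" "Z \<subseteq> {-1<..<1}" "card Z = r"
    using legendre_roots[of r] unfolding Z_def by auto
  have Zne: "Z \<noteq> {}" using Zr r1 by auto
  have sym: "z \<in> Z \<Longrightarrow> -z \<in> Z" for z unfolding Z_def by (rule zeros_sym)
  have wpos: "gauss_weight Z z > 0" if "z \<in> Z" for z
    using weights(1)[OF r1] that unfolding Z_def gauss_weight_def by auto
  have wsum: "(\<Sum>z\<in>Z. gauss_weight Z z) = 1" using weights(2)[OF r1] unfolding Z_def .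
  have qw: "(1/2) * integral {-1..1} (\<lambda>x. poly f x) = (\<Sum>z\<in>Z. gauss_weight Z z * poly f z)"
    if "degree f \<le> 2*r - 1" for f
    using quadw[OF r1 that] unfolding Z_def .
  define m where "m = Min Z"
  have mZ: "m \<in> Z" unfolding m_def using Zr(1) Zne by simp
  have mle: "m \<le> z" if "z \<in> Z" for z unfolding m_def using Zr(1) that by simp
  have m0: "m \<le> 0" using mle[OF sym[OF mZ]] by simp
  have absZ: "\<bar>z\<bar> \<le> -m" if "z \<in> Z" for z
    using mle[OF that] mle[OF sym[OF that]] by simp
  define wf where "wf x = (if x \<in> Z then gauss_weight Z x else 0)" for x
  have wf_nn: "0 \<le> wf x" for x unfolding wf_def using wpos by (auto intro: less_imp_le)
  have wf_sum: "(\<integral>\<^sup>+x. ennreal (wf x) \<partial>count_space UNIV) = 1"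
  proof -
    have "(\<integral>\<^sup>+x. ennreal (wf x) \<partial>count_space UNIV) = (\<Sum>x\<in>Z. ennreal (wf x))"
      by (rule nn_integral_count_space') (auto simp: wf_def Zr(1))
    also have "\<dots> = ennreal (\<Sum>x\<in>Z. wf x)" using wf_nn by (simp add: sum_ennreal)
    also have "(\<Sum>x\<in>Z. wf x) = 1" unfolding wf_def using wsum by simp
    finally show ?thesis by simp
  qed
  define q where "q = embed_pmf wf"
  have pq: "pmf q x = wf x" for x unfolding q_def using pmf_embed_pmf[OF wf_nn wf_sum] .
  have sq: "set_pmf q = Z" unfolding q_def set_embed_pmf[OF wf_nn wf_sum] wf_def
    using wpos by (auto simp: less_imp_neq[symmetric])
  have Eq: "measure_pmf.expectation q f = (\<Sum>z\<in>Z. gauss_weight Z z * f z)" for f :: "real \<Rightarrow> real"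
    by (subst integral_measure_pmf_real[of Z]) (auto simp: Zr(1) sq pq wf_def mult.commute intro!: sum.cong)
  have qXi: "q \<in> Xi n"
    unfolding Xi_def
  proof (intro CollectI conjI allI impI)
    show "finite (set_pmf q)" using sq Zr(1) by simp
    show "set_pmf q \<subseteq> {-1..1}" using sq Zr(2) by auto
    fix l assume l: "l \<le> n"
    have "(1/2) * integral {-1..1} (\<lambda>x. poly (monom 1 l) x) = (\<Sum>z\<in>Z. gauss_weight Z z * poly (monom 1 l) z)"
      by (rule qw) (use l rn in \<open>simp add: degree_monom_eq\<close>)
    then show "measure_pmf.expectation q (\<lambda>x. x ^ l) = 1 / 2 * integral {-1..1} (\<lambda>x. x ^ l)"
      unfolding Eq by (simp add: poly_monom)
  qed
  have uq: "u_supp q = \<bar>Min Z\<bar>"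
    unfolding u_supp_def sq m_def[symmetric]
  proof (rule Max_eqI)
    show "finite (abs ` Z)" using Zr(1) by simp
    show "\<And>y. y \<in> abs ` Z \<Longrightarrow> y \<le> \<bar>m\<bar>" using absZ m0 by auto
    show "\<bar>m\<bar> \<in> abs ` Z" using mZ by simp
  qed
  have part2: "\<exists>q. (\<forall>x. pmf q x = (if x \<in> Z then gauss_weight Z x else 0)) \<and>
              q \<in> Xi n \<and> u_supp q = \<bar>Min Z\<bar>"
    using pq qXi uq unfolding wf_def by blast
  have part1: "\<bar>m\<bar> \<le> u_supp p" if pXi: "p \<in> Xi n" for p
  proof (rule ccontr)
    assume "\<not> \<bar>m\<bar> \<le> u_supp p"
    then have ult: "u_supp p < -m" using m0 by simp
    define S where "S = set_pmf p"
    have finS: "finite S" using pXi unfolding Xi_def S_def by simp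
    have Sne: "S \<noteq> {}" unfolding S_def by (rule set_pmf_not_empty)
    have inS: "m < x \<and> x < -m" if "x \<in> S" for x
    proof -
      have "\<bar>x\<bar> \<le> u_supp p" unfolding u_supp_def S_def[symmetric] using finS that by simp
      then show ?thesis using ult by (auto simp: abs_if split: if_splits)
    qed
    have mneg: "m < 0" using inS Sne m0 by force
    define M where "M = -m"
    have MZ: "M \<in> Z" unfolding M_def using sym[OF mZ] .
    have mM: "m \<noteq> M" using mneg unfolding M_def by simp
    define Z' where "Z' = Z - {m, M}"
    have cZ': "card Z' = r - 2" unfolding Z'_def using Zr mZ MZ mM by (simp add: card_Diff_subset)
    have r2: "r \<ge> 2"
    proof -
      have "card {m, M} \<le> card Z" using Zr(1) mZ MZ by (intro card_mono) auto
      then show ?thesis using mM Zr(3) by simp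
    qed
    have finZ': "finite Z'" unfolding Z'_def using Zr(1) by simp
    define h where "h = (\<Prod>z\<in>Z'. [:-z, 1:]^2)"
    define g where "g = [:-m, 1:] * [:-M, 1:] * h"
    have ph: "poly h x = (\<Prod>z\<in>Z'. (x - z)^2)" for x
      unfolding h_def poly_prod by (simp add: algebra_simps)
    have pg: "poly g x = (x - m) * (x - M) * poly h x" for x
      unfolding g_def by (simp add: algebra_simps)
    have dh: "degree h \<le> 2 * (r - 2)"
    proof -
      have "degree h \<le> sum (degree \<circ> (\<lambda>z. [:-z, 1:]^2)) Z'"
        unfolding h_def by (rule degree_prod_sum_le[OF finZ'])
      also have "\<dots> \<le> (\<Sum>z\<in>Z'. 2)"
        by (intro sum_mono) (unfold o_def, rule order.trans[OF degree_power_le], simp)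
      finally show ?thesis using cZ' by simp
    qed
    have dg: "degree g \<le> 2 * r - 2"
    proof -
      have "degree g \<le> degree ([:-m, 1:] * [:-M, 1:]) + degree h"
        unfolding g_def by (rule degree_mult_le)
      also have "degree ([:-m, 1:] * [:-M, 1:]) \<le> 2"
        using degree_mult_le[of "[:-m, 1:]" "[:-M, 1:]"] by simp
      finally show ?thesis using dh r2 by simp
    qed
    have hnn: "poly h x \<ge> 0" for x unfolding ph by (intro prod_nonneg) simp
    have hZ: "poly h z = 0" if "z \<in> Z'" for z
      unfolding ph using finZ' that by (subst prod_zero_iff) auto
    have gZ: "poly g z = 0" if "z \<in> Z" for z
    proof (cases "z \<in> Z'")
      case True then show ?thesis using hZ pg by simp
    next
      case False then have "z = m \<or> z = M" using that unfolding Z'_def by auto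
      then show ?thesis using pg by auto
    qed
    have Eg: "measure_pmf.expectation p (\<lambda>x. poly g x) = 0"
    proof -
      have "measure_pmf.expectation p (\<lambda>x. poly g x) = (1/2) * integral {-1..1} (\<lambda>x. poly g x)"
        by (rule Xi_poly[OF pXi]) (use dg rn in simp)
      also have "\<dots> = (\<Sum>z\<in>Z. gauss_weight Z z * poly g z)"
        by (rule qw) (use dg in simp)
      also have "\<dots> = 0" using gZ by simp
      finally show ?thesis .
    qed
    have Ep: "measure_pmf.expectation p f = (\<Sum>x\<in>S. f x * pmf p x)" for f :: "real \<Rightarrow> real"
      by (rule integral_measure_pmf_real) (use finS in \<open>auto simp: S_def\<close>)
    have gS: "poly g x * pmf p x \<le> 0" if "x \<in> S" for x
    proof -
      have "(x - m) * (x - M) < 0" using inS[OF that] unfolding M_def by (simp add: mult_pos_neg)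
      then have "poly g x \<le> 0" unfolding pg using hnn[of x] by (simp add: mult_nonpos_nonneg)
      then show ?thesis by (simp add: mult_nonpos_nonneg)
    qed
    have "(\<Sum>x\<in>S. - (poly g x * pmf p x)) = 0" using Eg Ep[of "\<lambda>x. poly g x"] by (simp add: sum_negf)
    moreover have "\<And>x. x \<in> S \<Longrightarrow> 0 \<le> - (poly g x * pmf p x)" using gS by simp
    ultimately have g0: "\<forall>x\<in>S. - (poly g x * pmf p x) = 0"
      using sum_nonneg_eq_0_iff[OF finS, of "\<lambda>x. - (poly g x * pmf p x)"] by blast
    have hS: "poly h x = 0" if "x \<in> S" for x
    proof -
      have "pmf p x > 0" using that unfolding S_def by (simp add: pmf_positive)
      moreover have "poly g x = 0 \<or> pmf p x = 0" using g0 that by simp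
      ultimately have "poly g x = 0" by simp
      moreover have "(x - m) * (x - M) \<noteq> 0" using inS[OF that] unfolding M_def by auto
      ultimately show ?thesis unfolding pg by simp
    qed
    have Eh0: "measure_pmf.expectation p (\<lambda>x. poly h x) = 0"
      unfolding Ep using hS by simp
    have "measure_pmf.expectation p (\<lambda>x. poly h x) = (1/2) * integral {-1..1} (\<lambda>x. poly h x)"
      by (rule Xi_poly[OF pXi]) (use dh rn in simp)
    also have "\<dots> = (\<Sum>z\<in>Z. gauss_weight Z z * poly h z)"
      by (rule qw) (use dh in simp)
    finally have Eh: "measure_pmf.expectation p (\<lambda>x. poly h x) = (\<Sum>z\<in>Z. gauss_weight Z z * poly h z)" .
    have "poly h m > 0"
    proof -
      have "m \<notin> Z'" unfolding Z'_def by simp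
      then have "\<forall>z\<in>Z'. (m - z)^2 > 0" by auto
      then show ?thesis unfolding ph by (intro prod_pos) auto
    qed
    then have "gauss_weight Z m * poly h m > 0" using wpos[OF mZ] by simp
    also have "gauss_weight Z m * poly h m \<le> (\<Sum>z\<in>Z. gauss_weight Z z * poly h z)"
      by (rule member_le_sum) (use mZ Zr(1) wpos hnn in \<open>auto intro: mult_nonneg_nonneg less_imp_le\<close>)
    finally show False using Eh Eh0 by simp
  qed
  show ?thesis using part1 part2 unfolding m_def by blast
qed


end
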